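(* The continuous density $f$ of the limiting Quicksort random variable $Y$ satisfies $f(x)>0$ for every $x\in\mathbb{R}$.
   Context: Let $g(u):=2u\ln u+2(1-u)\ln(1-u)+1$ for $u\in(0,1)$. The limiting Quicksort random variable $Y$ is the limit in distribution of $(X_n-\mathbf{E}X_n)/n$, where $X_n$ is the number of comparisons used by randomized Quicksort on $n$ distinct numbers; equivalently, its law is the unique law with $\mathbf{E}Y=0$ and finite variance satisfying $Y\overset{d}{=}UY+(1-U)Z+g(U)$, where on the right $U,Y,Z$ are independent, $Z\overset{d}{=}Y$ and $U$ is uniform on $(0,1)$. $Y$ has a continuous (indeed infinitely differentiable) density $f$. *)

theory Defs
  imports "HOL-Probability.Probability"
begin

definition qs_toll :: "real \<Rightarrow> real" where
  "qs_toll u = 2 * u * ln u + 2 * (1 - u) * ln (1 - u) + 1"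

definition unif01 :: "real measure" where
  "unif01 = uniform_measure lborel {0<..<1}"

definition quicksort_law :: "real measure \<Rightarrow> bool" where
  "quicksort_law \<mu> \<longleftrightarrow>
     prob_space \<mu> \<and> sets \<mu> = sets borel \<and>
     integrable \<mu> (\<lambda>x. x ^ 2) \<and>
     (\<integral>x. x \<partial>\<mu>) = 0 \<and>
     \<mu> = distr (unif01 \<Otimes>\<^sub>M (\<mu> \<Otimes>\<^sub>M \<mu>)) borel
            (\<lambda>(u, y, z). u * y + (1 - u) * z + qs_toll u)"

end

theory Submission
  imports Defs "HOL-Real_Asymp.Real_Asymp"
begin

lemma H_meas:
  assumes "sets \<mu> = sets borel"
  shows "(\<lambda>(u, y, z). u * y + (1 - u) * z + qs_toll u) \<in> borel_measurable (unif01 \<Otimes>\<^sub>M (\<mu> \<Otimes>\<^sub>M \<mu>))"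
proof -
  have "sets (unif01 \<Otimes>\<^sub>M (\<mu> \<Otimes>\<^sub>M \<mu>)) = sets (borel \<Otimes>\<^sub>M (borel \<Otimes>\<^sub>M (borel::real measure)))"
    by (intro sets_pair_measure_cong) (auto simp: assms unif01_def)
  moreover have "(\<lambda>(u, y, z). u * y + (1 - u) * z + qs_toll u) \<in> borel_measurable (borel \<Otimes>\<^sub>M (borel \<Otimes>\<^sub>M (borel::real measure)))"
    unfolding qs_toll_def by measurable
  ultimately show ?thesis using measurable_cong_sets by blast
qed

lemma lower:
  fixes \<mu> :: "real measure" and f :: "real \<Rightarrow> real"
  assumes dens: "\<mu> = density lborel (\<lambda>x. ennreal (f x))"
    and nn: "\<And>x. f x \<ge> 0" and fm: "f \<in> borel_measurable borel"
    and ps: "prob_space \<mu>"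
    and A: "A \<in> sets (unif01 \<Otimes>\<^sub>M (\<mu> \<Otimes>\<^sub>M \<mu>))"
    and ab: "0 \<le> a" "a < b" "b \<le> 1" and pq: "p < q" and e: "\<epsilon> > 0" and d: "\<delta> \<ge> 0"
    and J: "\<And>y. y \<in> {p<..<q} \<Longrightarrow> f y \<ge> \<delta>"
    and H: "\<And>u y. u \<in> {a<..<b} \<Longrightarrow> y \<in> {p<..<q} \<Longrightarrow>
             \<exists>z0. \<forall>z \<in> {z0-\<epsilon><..<z0+\<epsilon>}. f z \<ge> \<delta> \<and> (u,y,z) \<in> A"
  shows "emeasure (unif01 \<Otimes>\<^sub>M (\<mu> \<Otimes>\<^sub>M \<mu>)) A \<ge> ennreal (2*\<epsilon>*\<delta>) * ennreal (\<delta>*(q-p)) * ennreal (b-a)"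
proof -
  interpret P: prob_space \<mu> by (rule ps)
  interpret PP: pair_prob_space \<mu> \<mu> by unfold_locales
  have sfPP: "sigma_finite_measure (\<mu> \<Otimes>\<^sub>M \<mu>)"
    by (intro prob_space_imp_sigma_finite prob_space_pair ps)
  have sets_mu: "sets \<mu> = sets borel" using dens by simp
  have sp: "space \<mu> = UNIV" using dens by simp
  have su: "sets unif01 = sets borel" by (simp add: unif01_def)
  have Am: "indicator A \<in> borel_measurable (unif01 \<Otimes>\<^sub>M (\<mu> \<Otimes>\<^sub>M \<mu>))" using A by simp
  have "emeasure (unif01 \<Otimes>\<^sub>M (\<mu> \<Otimes>\<^sub>M \<mu>)) A = (\<integral>\<^sup>+ w. indicator A w \<partial>(unif01 \<Otimes>\<^sub>M (\<mu> \<Otimes>\<^sub>M \<mu>)))"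
    using A by simp
  also have "\<dots> = (\<integral>\<^sup>+ u. \<integral>\<^sup>+ yz. indicator A (u, yz) \<partial>(\<mu> \<Otimes>\<^sub>M \<mu>) \<partial>unif01)"
    using sigma_finite_measure.nn_integral_fst[OF sfPP Am] by simp
  finally have eq1: "emeasure (unif01 \<Otimes>\<^sub>M (\<mu> \<Otimes>\<^sub>M \<mu>)) A = (\<integral>\<^sup>+ u. \<integral>\<^sup>+ yz. indicator A (u, yz) \<partial>(\<mu> \<Otimes>\<^sub>M \<mu>) \<partial>unif01)" .
  have inner: "(\<integral>\<^sup>+ yz. indicator A (u, yz) \<partial>(\<mu> \<Otimes>\<^sub>M \<mu>)) \<ge> ennreal (2*\<epsilon>*\<delta>) * ennreal (\<delta>*(q-p))"
    if u: "u \<in> {a<..<b}" for u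
  proof -
    have m1: "(\<lambda>yz. indicator A (u, yz) :: ennreal) \<in> borel_measurable (\<mu> \<Otimes>\<^sub>M \<mu>)"
      using measurable_Pair2[OF Am, of u] by (simp add: unif01_def)
    have "(\<integral>\<^sup>+ yz. indicator A (u, yz) \<partial>(\<mu> \<Otimes>\<^sub>M \<mu>)) = (\<integral>\<^sup>+ y. \<integral>\<^sup>+ z. indicator A (u, y, z) \<partial>\<mu> \<partial>\<mu>)"
      using P.nn_integral_fst[OF m1] by simp
    also have "\<dots> \<ge> (\<integral>\<^sup>+ y. ennreal (2*\<epsilon>*\<delta>) * indicator {p<..<q} y \<partial>\<mu>)"
    proof (rule nn_integral_mono)
      fix y
      show "ennreal (2*\<epsilon>*\<delta>) * indicator {p<..<q} y \<le> (\<integral>\<^sup>+ z. indicator A (u, y, z) \<partial>\<mu>)"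
      proof (cases "y \<in> {p<..<q}")
        case False then show ?thesis by simp
      next
        case True
        obtain z0 where z0: "\<forall>z \<in> {z0-\<epsilon><..<z0+\<epsilon>}. f z \<ge> \<delta> \<and> (u,y,z) \<in> A"
          using H[OF u True] by blast
        have m2: "(\<lambda>z. indicator A (u, y, z) :: ennreal) \<in> borel_measurable lborel"
          using measurable_Pair2[OF m1, of y] sets_mu sp by (simp cong: measurable_cong_sets)
        have "(\<integral>\<^sup>+ z. indicator A (u, y, z) \<partial>\<mu>) = (\<integral>\<^sup>+ z. ennreal (f z) * indicator A (u, y, z) \<partial>lborel)"
          unfolding dens using fm m2 by (subst nn_integral_density) auto
        also have "\<dots> \<ge> (\<integral>\<^sup>+ z. ennreal \<delta> * indicator {z0-\<epsilon><..<z0+\<epsilon>} z \<partial>lborel)"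
          using z0 by (intro nn_integral_mono) (auto split: split_indicator intro!: ennreal_leI)
        also have "(\<integral>\<^sup>+ z. ennreal \<delta> * indicator {z0-\<epsilon><..<z0+\<epsilon>} z \<partial>lborel) = ennreal (2*\<epsilon>*\<delta>)"
          using e d by (subst nn_integral_cmult_indicator) (auto simp: ennreal_mult[symmetric] algebra_simps)
        finally show ?thesis using True by simp
      qed
    qed
    also have "(\<integral>\<^sup>+ y. ennreal (2*\<epsilon>*\<delta>) * indicator {p<..<q} y \<partial>\<mu>) = ennreal (2*\<epsilon>*\<delta>) * emeasure \<mu> {p<..<q}"
      using sets_mu by (intro nn_integral_cmult_indicator) auto
    finally have c1: "ennreal (2*\<epsilon>*\<delta>) * emeasure \<mu> {p<..<q} \<le> (\<integral>\<^sup>+ yz. indicator A (u, yz) \<partial>(\<mu> \<Otimes>\<^sub>M \<mu>))" .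
    have "emeasure \<mu> {p<..<q} \<ge> ennreal (\<delta>*(q-p))"
    proof -
      have "emeasure \<mu> {p<..<q} = (\<integral>\<^sup>+ y. ennreal (f y) * indicator {p<..<q} y \<partial>lborel)"
        unfolding dens using fm by (subst emeasure_density) auto
      also have "\<dots> \<ge> (\<integral>\<^sup>+ y. ennreal \<delta> * indicator {p<..<q} y \<partial>lborel)"
        using J by (intro nn_integral_mono) (auto split: split_indicator intro!: ennreal_leI)
      also have "(\<integral>\<^sup>+ y. ennreal \<delta> * indicator {p<..<q} y \<partial>lborel) = ennreal (\<delta>*(q-p))"
        using pq d by (subst nn_integral_cmult_indicator) (auto simp: ennreal_mult[symmetric] algebra_simps)
      finally show ?thesis .
    qed
    then show ?thesis using c1 by (meson mult_left_mono order_trans zero_le)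
  qed
  have "(\<integral>\<^sup>+ u. \<integral>\<^sup>+ yz. indicator A (u, yz) \<partial>(\<mu> \<Otimes>\<^sub>M \<mu>) \<partial>unif01)
     \<ge> (\<integral>\<^sup>+ u. (ennreal (2*\<epsilon>*\<delta>) * ennreal (\<delta>*(q-p))) * indicator {a<..<b} u \<partial>unif01)"
    using inner by (intro nn_integral_mono) (auto split: split_indicator)
  also have "(\<integral>\<^sup>+ u. (ennreal (2*\<epsilon>*\<delta>) * ennreal (\<delta>*(q-p))) * indicator {a<..<b} u \<partial>unif01)
     = (ennreal (2*\<epsilon>*\<delta>) * ennreal (\<delta>*(q-p))) * emeasure unif01 {a<..<b}"
    using su by (intro nn_integral_cmult_indicator) auto
  also have "emeasure unif01 {a<..<b} = ennreal (b - a)"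
  proof -
    have "{0<..<(1::real)} \<inter> {a<..<b} = {a<..<b}" using ab by auto
    then show ?thesis unfolding unif01_def using ab by (simp add: divide_ennreal_def)
  qed
  finally show ?thesis using eq1 by simp
qed

lemma key:
  fixes \<mu> :: "real measure" and f :: "real \<Rightarrow> real"
  assumes ql: "quicksort_law \<mu>"
    and cont: "continuous_on UNIV f"
    and nn: "\<And>x. f x \<ge> 0"
    and dens: "\<mu> = density lborel (\<lambda>x. ennreal (f x))"
    and y0: "f y0 > 0" and u0: "0 < u0" "u0 < 1"
  shows "f (y0 + qs_toll u0) > 0"
proof (rule ccontr)
  assume neg: "\<not> f (y0 + qs_toll u0) > 0"
  define x0 where "x0 = y0 + qs_toll u0"
  have fx0: "f x0 = 0" using neg nn[of x0] unfolding x0_def by linarith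
  define H where "H = (\<lambda>(u::real, y::real, z::real). u * y + (1 - u) * z + qs_toll u)"
  define M where "M = unif01 \<Otimes>\<^sub>M (\<mu> \<Otimes>\<^sub>M \<mu>)"
  have ps: "prob_space \<mu>" and sets_mu: "sets \<mu> = sets borel"
    and eq: "\<mu> = distr M borel H"
    using ql unfolding quicksort_law_def M_def H_def by blast+
  have fm: "f \<in> borel_measurable borel" using cont by (rule borel_measurable_continuous_onI)
  have Hm: "H \<in> borel_measurable M" unfolding H_def M_def by (rule H_meas[OF sets_mu])
  have isc: "isCont f x" for x using cont continuous_on_eq_continuous_at by blast
  define \<delta> where "\<delta> = f y0 / 2"
  have dpos: "\<delta> > 0" using y0 unfolding \<delta>_def by simp
  obtain r where r: "r > 0" "\<And>z. \<bar>z - y0\<bar> < r \<Longrightarrow> f z \<ge> \<delta>"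
  proof -
    obtain r where "r > 0" "\<forall>z. dist z y0 < r \<longrightarrow> dist (f z) (f y0) < \<delta>"
      using isc[of y0] dpos unfolding continuous_at_eps_delta by blast
    then have "r > 0" "\<And>z. \<bar>z - y0\<bar> < r \<Longrightarrow> \<bar>f z - f y0\<bar> < \<delta>" unfolding dist_real_def by auto
    moreover have "\<And>z. \<bar>z - y0\<bar> < r \<Longrightarrow> f z \<ge> \<delta>"
    proof -
      fix z assume "\<bar>z - y0\<bar> < r"
      then have "\<bar>f z - f y0\<bar> < \<delta>" using calculation by blast
      then show "f z \<ge> \<delta>" unfolding \<delta>_def by linarith
    qed
    ultimately show ?thesis using that by blast
  qed
  define zs where "zs = (\<lambda>u y. (x0 - u * y - qs_toll u) / (1 - u))"
  have zs0: "zs u0 y0 = y0" using u0 unfolding zs_def x0_def by (simp add: field_simps)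
  have iscz: "isCont (\<lambda>u. zs u y0) u0"
    unfolding zs_def qs_toll_def using u0 by (auto intro!: continuous_intros)
  obtain \<eta>1 where eta1: "\<eta>1 > 0" "\<And>u. \<bar>u - u0\<bar> < \<eta>1 \<Longrightarrow> \<bar>zs u y0 - y0\<bar> < r / 4"
  proof -
    obtain e where "e > 0" "\<forall>u. dist u u0 < e \<longrightarrow> dist (zs u y0) (zs u0 y0) < r / 4"
      using iscz[unfolded continuous_at_eps_delta, rule_format, of "r/4"] r(1) by auto
    then show ?thesis using that[of e] zs0 unfolding dist_real_def by force
  qed
  define \<eta> where "\<eta> = min \<eta>1 (min (u0/2) ((1-u0)/2))"
  have eta: "\<eta> > 0" "\<eta> \<le> \<eta>1" "\<eta> \<le> u0/2" "\<eta> \<le> (1-u0)/2"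
  proof -
    show "\<eta> > 0" using eta1(1) u0 unfolding \<eta>_def by simp
    show "\<eta> \<le> \<eta>1" unfolding \<eta>_def by (rule min.cobounded1)
    have "min (u0/2) ((1-u0)/2) \<le> u0/2" "min (u0/2) ((1-u0)/2) \<le> (1-u0)/2" by (rule min.cobounded1, rule min.cobounded2)
    then show "\<eta> \<le> u0/2" "\<eta> \<le> (1-u0)/2" unfolding \<eta>_def using min.cobounded2[of \<eta>1 "min (u0/2) ((1-u0)/2)"] by linarith+
  qed
  define \<rho> where "\<rho> = r * (1 - u0) / 8"
  have rho: "\<rho> > 0" "\<rho> < r" using r u0 unfolding \<rho>_def by auto
  define c where "c = 2 * \<delta> * (\<delta> * (2 * \<rho>)) * (2 * \<eta>)"
  have cpos: "c > 0" using dpos rho eta unfolding c_def by simp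
  obtain d where d: "d > 0" "\<And>x. \<bar>x - x0\<bar> < d \<Longrightarrow> f x < c / 4"
  proof -
    obtain e where "e > 0" "\<forall>x. dist x x0 < e \<longrightarrow> dist (f x) (f x0) < c / 4"
      using isc[of x0, unfolded continuous_at_eps_delta, rule_format, of "c/4"] cpos by auto
    then show ?thesis using that[of e] fx0 unfolding dist_real_def by force
  qed
  define \<epsilon> where "\<epsilon> = min d (r / 2)"
  have e: "\<epsilon> > 0" "\<epsilon> \<le> d" "\<epsilon> \<le> r/2" using d r unfolding \<epsilon>_def by auto
  define B where "B = {x0 - \<epsilon> <..< x0 + \<epsilon>}"
  define A where "A = H -` B \<inter> space M"
  have A: "A \<in> sets M" unfolding A_def B_def using Hm by (intro measurable_sets) auto
  have spM: "space M = UNIV" unfolding M_def using sets_mu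
    by (simp add: space_pair_measure unif01_def dens)
  have low: "emeasure M A \<ge> ennreal (2*\<epsilon>*\<delta>) * ennreal (\<delta>*((y0+\<rho>)-(y0-\<rho>))) * ennreal ((u0+\<eta>)-(u0-\<eta>))"
    unfolding M_def
  proof (rule lower[OF dens nn fm ps])
    show "A \<in> sets (unif01 \<Otimes>\<^sub>M \<mu> \<Otimes>\<^sub>M \<mu>)" using A unfolding M_def .
    show "0 \<le> u0 - \<eta>" "u0 - \<eta> < u0 + \<eta>" "u0 + \<eta> \<le> 1" "y0 - \<rho> < y0 + \<rho>" "0 < \<epsilon>" "0 \<le> \<delta>"
      using eta u0 rho e dpos by auto
    show "\<delta> \<le> f y" if "y \<in> {y0 - \<rho><..<y0 + \<rho>}" for y
      using r(2)[of y] that rho by auto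
    show "\<exists>z0. \<forall>z\<in>{z0 - \<epsilon><..<z0 + \<epsilon>}. \<delta> \<le> f z \<and> (u, y, z) \<in> A"
      if u: "u \<in> {u0 - \<eta><..<u0 + \<eta>}" and y: "y \<in> {y0 - \<rho><..<y0 + \<rho>}" for u y
    proof (intro exI ballI conjI)
      have u01: "0 < u" "u < 1" "1 - u > (1 - u0)/2" using u eta u0 by auto
      have h1: "\<bar>zs u y0 - y0\<bar> < r/4" using eta1(2)[of u] u eta by auto
      have "zs u y - zs u y0 = ((x0 - u * y - qs_toll u) - (x0 - u * y0 - qs_toll u)) / (1 - u)"
        unfolding zs_def by (rule diff_divide_distrib[symmetric])
      also have "\<dots> = - u * (y - y0) / (1 - u)" by (simp add: algebra_simps)
      finally have "zs u y - zs u y0 = - u * (y - y0) / (1 - u)" .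
      then have "\<bar>zs u y - zs u y0\<bar> = u * \<bar>y - y0\<bar> / (1 - u)"
        using u01 by (simp add: abs_mult abs_divide)
      also have "\<dots> \<le> \<bar>y - y0\<bar> / (1 - u)"
        using u01 by (intro divide_right_mono mult_left_le_one_le) auto
      also have "\<dots> \<le> \<rho> / ((1 - u0)/2)"
        using u01 y u0 by (intro frac_le) auto
      also have "\<dots> = r / 4" unfolding \<rho>_def using u0 by (simp add: field_simps)
      finally have h2: "\<bar>zs u y - zs u y0\<bar> \<le> r / 4" .
      fix z assume z: "z \<in> {zs u y - \<epsilon><..<zs u y + \<epsilon>}"
      have "zs u y0 - y0 < r/4" "y0 - zs u y0 < r/4" using h1 abs_less_iff[of "zs u y0 - y0" "r/4"] by linarith+
      moreover have "zs u y - zs u y0 \<le> r/4" "zs u y0 - zs u y \<le> r/4" using h2 abs_le_iff[of "zs u y - zs u y0" "r/4"] by linarith+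
      ultimately have "\<bar>z - y0\<bar> < r" using z e(3) abs_less_iff[of "z - y0" r] by auto
      then show "\<delta> \<le> f z" by (rule r(2))
      have "(1 - u) * zs u y = x0 - u * y - qs_toll u" unfolding zs_def using u01 by simp
      then have "H (u, y, z) - x0 = (1 - u) * (z - zs u y)" unfolding H_def by (simp add: algebra_simps)
      then have "\<bar>H (u, y, z) - x0\<bar> = (1 - u) * \<bar>z - zs u y\<bar>" using u01 by (simp add: abs_mult)
      also have "\<dots> \<le> \<bar>z - zs u y\<bar>" using u01 by (intro mult_left_le_one_le) auto
      also have "\<dots> < \<epsilon>" using z by auto
      finally show "(u, y, z) \<in> A" unfolding A_def B_def spM by auto
    qed
  qed
  have "emeasure \<mu> B = emeasure (distr M borel H) B" by (subst eq[symmetric]) (rule refl)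
  also have "\<dots> = emeasure M A" unfolding A_def B_def using Hm by (intro emeasure_distr) auto
  finally have mB: "emeasure \<mu> B = emeasure M A" .
  have "emeasure \<mu> B = (\<integral>\<^sup>+ x. ennreal (f x) * indicator B x \<partial>lborel)"
    unfolding dens B_def using fm by (subst emeasure_density) auto
  also have "\<dots> \<le> (\<integral>\<^sup>+ x. ennreal (c/4) * indicator B x \<partial>lborel)"
  proof (rule nn_integral_mono)
    fix x
    show "ennreal (f x) * indicator B x \<le> ennreal (c/4) * indicator B x"
    proof (cases "x \<in> B")
      case True
      then have "\<bar>x - x0\<bar> < d" using e unfolding B_def by (auto simp: abs_less_iff)
      then have "f x \<le> c/4" using d(2) by (simp add: less_imp_le)
      then show ?thesis using True by (simp add: ennreal_leI)
    qed simp
  qed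
  also have "\<dots> = ennreal (c/4 * (2*\<epsilon>))"
    unfolding B_def using e cpos by (subst nn_integral_cmult_indicator) (auto simp: ennreal_mult[symmetric])
  finally have up: "emeasure \<mu> B \<le> ennreal (c/4 * (2*\<epsilon>))" .
  have "ennreal (2*\<epsilon>*\<delta>) * ennreal (\<delta>*((y0+\<rho>)-(y0-\<rho>))) * ennreal ((u0+\<eta>)-(u0-\<eta>)) = ennreal (\<epsilon> * c)"
    unfolding c_def using e dpos rho eta by (simp add: ennreal_mult[symmetric] algebra_simps)
  then have "ennreal (\<epsilon> * c) \<le> ennreal (c/4 * (2*\<epsilon>))" using low up mB by simp
  then have "\<epsilon> * c \<le> c/4 * (2*\<epsilon>)" using e cpos by simp
  then show False using e cpos by (simp add: field_simps)
qed

lemma g_lim: "(qs_toll \<longlongrightarrow> 1) (at_right 0)"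
  unfolding qs_toll_def by real_asymp

lemma g_range:
  obtains a b where "a < 0" "0 < b" "\<And>s. a \<le> s \<Longrightarrow> s \<le> b \<Longrightarrow> \<exists>u. 0 < u \<and> u < 1 \<and> qs_toll u = s"
proof -
  have "eventually (\<lambda>u. qs_toll u > 1/2) (at_right (0::real))"
    using g_lim by (rule order_tendstoD) simp
  then obtain e where e: "e > 0" "\<And>u. 0 < u \<Longrightarrow> u < e \<Longrightarrow> qs_toll u > 1/2"
    unfolding eventually_at_right_field by auto
  define u1 where "u1 = min (e/2) (1/4)"
  have u1: "0 < u1" "u1 < e" "u1 \<le> 1/4" using e unfolding u1_def by auto
  have gu1: "qs_toll u1 > 1/2" using e(2) u1 by auto
  have gh: "qs_toll (1/2) = 1 - 2 * ln 2"
    unfolding qs_toll_def by (simp add: ln_div)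
  have neg: "qs_toll (1/2) < 0" using gh ln2_ge_two_thirds by simp
  have cont: "continuous_on {u1..1/2} qs_toll"
    unfolding qs_toll_def using u1 by (auto intro!: continuous_intros)
  show ?thesis
  proof (rule that[of "qs_toll (1/2)" "qs_toll u1"])
    show "qs_toll (1/2) < 0" by (rule neg)
    show "0 < qs_toll u1" using gu1 by simp
    fix s assume s: "qs_toll (1/2) \<le> s" "s \<le> qs_toll u1"
    obtain u where "u1 \<le> u" "u \<le> 1/2" "qs_toll u = s"
      using IVT2'[OF s _ cont] u1 by auto
    then show "\<exists>u. 0 < u \<and> u < 1 \<and> qs_toll u = s" using u1 by (intro exI[of _ u]) auto
  qed
qed


theorem corollary4p2:
  fixes \<mu> :: "real measure" and f :: "real \<Rightarrow> real"
  assumes "quicksort_law \<mu>"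
    and "continuous_on UNIV f"
    and "\<And>x. f x \<ge> 0"
    and "\<mu> = density lborel (\<lambda>x. ennreal (f x))"
  shows "\<forall>x. f x > 0"
proof
  fix x
  have ps: "prob_space \<mu>" using assms(1) unfolding quicksort_law_def by blast
  obtain y0 where y0: "f y0 > 0"
  proof (rule ccontr)
    assume "\<not> thesis"
    then have z: "\<And>y. f y = 0" using that assms(3) by (metis less_eq_real_def)
    have "emeasure \<mu> (space \<mu>) = 1" using ps by (simp add: prob_space.emeasure_space_1)
    moreover have "emeasure \<mu> (space \<mu>) = 0" unfolding assms(4) by (simp add: z emeasure_density)
    ultimately show False by simp
  qed
  obtain a b where ab: "a < 0" "0 < b"
    and S: "\<And>s. a \<le> s \<Longrightarrow> s \<le> b \<Longrightarrow> \<exists>u. 0 < u \<and> u < 1 \<and> qs_toll u = s"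
    by (rule g_range) blast
  have step: "f y > 0 \<Longrightarrow> f (y + s) > 0" if hs: "a \<le> s" "s \<le> b" for y s
  proof -
    obtain u where "0 < u" "u < 1" "qs_toll u = s" using S[OF hs] by blast
    then show "f y > 0 \<Longrightarrow> f (y + s) > 0" using key[OF assms(1-4)] by blast
  qed
  have iter: "f (y0 + real n * s) > 0" if hs2: "a \<le> s" "s \<le> b" for n s
  proof (induction n)
    case 0 then show ?case using y0 by simp
  next
    case (Suc n)
    have "f (y0 + real n * s + s) > 0" using step[OF hs2 Suc] .
    then show ?case by (simp add: algebra_simps)
  qed
  define m where "m = min (-a) b"
  have m: "m > 0" "m \<le> -a" "m \<le> b" using ab unfolding m_def by auto
  define t where "t = x - y0"
  define n where "n = nat (ceiling (\<bar>t\<bar> / m)) + 1"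
  have npos: "real n > 0" unfolding n_def by simp
  have "\<bar>t\<bar> / m \<le> real n" unfolding n_def by linarith
  then have "\<bar>t\<bar> \<le> m * real n" using m by (simp add: field_simps)
  then have tn: "\<bar>t / real n\<bar> \<le> m" using npos by (simp add: field_simps abs_divide)
  have "a \<le> t / real n" "t / real n \<le> b" using tn m abs_le_iff[of "t / real n" m] by linarith+
  from iter[OF this, of n] have "f (y0 + real n * (t / real n)) > 0" .
  then show "f x > 0" using npos unfolding t_def by simp
qed

end
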